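(* Let $w\in\{0,1\}^*$ and let $w'$ be a subword of $w$ such that $w'=abb\,\mu(w'')$ or $w'=\mu(w'')\,bba$ for some letters $a,b\in\{0,1\}$ with $a\neq b$ and some word $w''\in\{0,1\}^*$ with $|w''|\geq 2$. Then $w$ contains a $\frac{7}{3}$-power (i.e., $w$ is not $\frac{7}{3}$-power-free).
   Context: $\mu$ is the Thue–Morse morphism on $\{0,1\}^*$, defined by $\mu(0)=01$, $\mu(1)=10$. A word $w'$ is a subword of $w$ if $w=uw'v$ for some words $u,v$. For a rational $\alpha\ge 1$, an $\alpha$-power is a word of the form $x^nx'$ with $x$ a nonempty word, $x'$ a prefix of $x$, $n$ a nonnegative integer and $n+|x'|/|x|=\alpha$. A word is $\alpha$-power-free if none of its subwords is a $\beta$-power for any rational $\beta\geq\alpha$; otherwise it contains an $\alpha$-power. *)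

theory Defs
  imports Complex_Main "HOL-Library.Sublist"
begin

text \<open>Binary words are modelled as bool lists: False stands for 0, True for 1.\<close>

definition tm_mu :: "bool list \<Rightarrow> bool list" where
  "tm_mu w = concat (map (\<lambda>c. [c, \<not> c]) w)"

definition is_power :: "bool list \<Rightarrow> rat \<Rightarrow> bool" where
  "is_power z \<beta> \<longleftrightarrow> (\<exists>x x' n. x \<noteq> [] \<and> prefix x' x \<and>
      z = concat (replicate n x) @ x' \<and>
      of_nat n + of_nat (length x') / of_nat (length x) = \<beta>)"

definition contains_power :: "rat \<Rightarrow> bool list \<Rightarrow> bool" where
  "contains_power \<alpha> w \<longleftrightarrow> (\<exists>z \<beta>. sublist z w \<and> \<beta> \<ge> \<alpha> \<and> is_power z \<beta>)"

end

theory Submission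
  imports Defs
begin

lemma tm_mu_Cons[simp]: "tm_mu (c # xs) = c # (\<not> c) # tm_mu xs"
  by (simp add: tm_mu_def)

lemma tm_mu_app[simp]: "tm_mu (xs @ ys) = tm_mu xs @ tm_mu ys"
  by (simp add: tm_mu_def)

lemma tm_mu_Nil[simp]: "tm_mu [] = []"
  by (simp add: tm_mu_def)

lemma ip_cube: "is_power [x,x,x] 3"
  unfolding is_power_def
  by (rule exI[of _ "[x]"], rule exI[of _ "[]"], rule exI[of _ 3]) (simp add: numeral_3_eq_3)

lemma ip_73: "is_power [x,y,y,x,y,y,x] (7/3)"
  unfolding is_power_def
  by (rule exI[of _ "[x,y,y]"], rule exI[of _ "[x]"], rule exI[of _ 2]) (simp add: numeral_2_eq_2)

lemma ip_52: "is_power [x,y,x,y,x] (5/2)"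
  unfolding is_power_def
  by (rule exI[of _ "[x,y]"], rule exI[of _ "[x]"], rule exI[of _ 2]) (simp add: numeral_2_eq_2)

lemma cp_cube: "sublist [x,x,x] w \<Longrightarrow> contains_power (7/3) w"
  unfolding contains_power_def using ip_cube[of x] by force

lemma cp_73: "sublist [x,y,y,x,y,y,x] w \<Longrightarrow> contains_power (7/3) w"
  unfolding contains_power_def using ip_73[of x y] by force

lemma cp_52: "sublist [x,y,x,y,x] w \<Longrightarrow> contains_power (7/3) w"
  unfolding contains_power_def using ip_52[of x y] by force

lemma sub_mid: "sublist z w' \<Longrightarrow> sublist w' w \<Longrightarrow> sublist z w"
  by (rule sublist_order.order.trans)

lemma cp_mono: "contains_power al z \<Longrightarrow> sublist z w \<Longrightarrow> contains_power al w"
  unfolding contains_power_def using sublist_order.order.trans by blast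

lemma cp_pre: "contains_power (7/3) [a,\<not>a,\<not>a,c,\<not>c,d,\<not>d]"
  apply (cases a; cases c; cases d; simp only: not_True_eq_False not_False_eq_True)
  subgoal by (rule cp_52[of False True]) (simp_all add: sublist_Cons_right)
  subgoal by (rule cp_73[of True False]) (simp_all add: sublist_Cons_right)
  subgoal by (rule cp_cube[of False]) (simp_all add: sublist_Cons_right)
  subgoal by (rule cp_cube[of False]) (simp_all add: sublist_Cons_right)
  subgoal by (rule cp_cube[of True]) (simp_all add: sublist_Cons_right)
  subgoal by (rule cp_cube[of True]) (simp_all add: sublist_Cons_right)
  subgoal by (rule cp_73[of False True]) (simp_all add: sublist_Cons_right)
  subgoal by (rule cp_52[of True False]) (simp_all add: sublist_Cons_right)
  done

lemma cp_suf: "contains_power (7/3) [c,\<not>c,d,\<not>d,\<not>a,\<not>a,a]"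
  apply (cases a; cases c; cases d; simp only: not_True_eq_False not_False_eq_True)
  subgoal by (rule cp_cube[of False]) (simp_all add: sublist_Cons_right)
  subgoal by (rule cp_73[of True False]) (simp_all add: sublist_Cons_right)
  subgoal by (rule cp_cube[of False]) (simp_all add: sublist_Cons_right)
  subgoal by (rule cp_52[of False True]) (simp_all add: sublist_Cons_right)
  subgoal by (rule cp_52[of True False]) (simp_all add: sublist_Cons_right)
  subgoal by (rule cp_cube[of True]) (simp_all add: sublist_Cons_right)
  subgoal by (rule cp_73[of False True]) (simp_all add: sublist_Cons_right)
  subgoal by (rule cp_cube[of True]) (simp_all add: sublist_Cons_right)
  done

theorem lemma4:
  fixes w w' w'' :: "bool list" and a b :: bool
  assumes "sublist w' w"
    and "a \<noteq> b"
    and "length w'' \<ge> 2"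
    and "w' = [a, b, b] @ tm_mu w'' \<or> w' = tm_mu w'' @ [b, b, a]"
  shows "contains_power (7/3) w"
proof -
  have hb: "b = (\<not> a)" using assms(2) by auto
  from assms(4) show ?thesis
  proof
    assume h: "w' = [a, b, b] @ tm_mu w''"
    obtain c d r where wr: "w'' = c # d # r" using assms(3)
      by (metis Suc_le_length_iff numeral_2_eq_2)
    have "sublist [a,\<not>a,\<not>a,c,\<not>c,d,\<not>d] w'"
      unfolding sublist_def h wr hb
      by (rule exI[of _ "[]"], rule exI[of _ "tm_mu r"]) simp
    then have "sublist [a,\<not>a,\<not>a,c,\<not>c,d,\<not>d] w"
      using assms(1) by (rule sub_mid)
    then show ?thesis by (rule cp_mono[OF cp_pre])
  next
    assume h: "w' = tm_mu w'' @ [b, b, a]"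
    have "length (rev w'') \<ge> 2" using assms(3) by simp
    then obtain d c r where "rev w'' = d # c # r"
      by (metis Suc_le_length_iff numeral_2_eq_2)
    then have wr: "w'' = rev r @ [c, d]"
      by (metis rev.simps rev_rev_ident append_Cons append_Nil append_assoc)
    have "sublist [c,\<not>c,d,\<not>d,\<not>a,\<not>a,a] w'"
      unfolding sublist_def h wr hb
      by (rule exI[of _ "tm_mu (rev r)"], rule exI[of _ "[]"]) simp
    then have "sublist [c,\<not>c,d,\<not>d,\<not>a,\<not>a,a] w"
      using assms(1) by (rule sub_mid)
    then show ?thesis by (rule cp_mono[OF cp_suf])
  qed
qed

end
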